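(* Let $f:\mathbb{B}\to\mathbb{H}$ be a function such that $P_f(\zeta_1,\zeta_2,\zeta_3)$ is positive semidefinite for all $\zeta_1,\zeta_2,\zeta_3\in\mathbb{D}=\mathbb{B}\cap\mathbb{C}$. Write $f(\zeta)=g(\zeta)+h(\zeta)\mathbf{j}$ with $g(\zeta),h(\zeta)\in\mathbb{C}$ for $\zeta\in\mathbb{D}$. Then for all $\zeta_1,\zeta_2,\zeta_3\in\mathbb{D}$ the complex matrix $\Big[\frac{1-g(\zeta_i)\overline{g(\zeta_j)}-h(\zeta_i)\overline{h(\zeta_j)}}{1-\zeta_i\bar\zeta_j}\Big]_{i,j=1}^3$ is positive semidefinite, and consequently $g$ and $h$ are analytic functions from $\mathbb{D}$ into the closed unit disk.
   Context: $\mathbb{H}$ denotes the real quaternions with imaginary units $\mathbf{i},\mathbf{j},\mathbf{k}$; every quaternion has a unique representation $a+b\mathbf{j}$ with $a,b\in\mathbb{C}=\mathbb{R}+\mathbf{i}\mathbb{R}$. $\mathbb{B}$ is the open unit ball of $\mathbb{H}$ and $\mathbb{D}$ the open complex unit disk. For $z_1,\dots,z_n\in\mathbb{B}$ the Pick matrix is $P_f(z_1,\dots,z_n)=\Big[\sum_{k=0}^\infty z_i^k(1-f(z_i)\overline{f(z_j)})\bar z_j^{\,k}\Big]_{i,j=1}^n$. A quaternionic matrix $A$ is positive semidefinite if $A=A^*$ and $x^*Ax\ge0$ for all quaternionic vectors $x$. *)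

theory Defs
  imports "HOL-Analysis.Analysis"
begin

text \<open>Real quaternions, represented via the unique decomposition q = a + b j with
  a, b complex (complex numbers being R + i R).
  Addition/subtraction are componentwise (library instance on pairs), the topology
  is that of complex x complex (= R^4).\<close>

type_synonym quat = "complex \<times> complex"

definition qof_complex :: "complex \<Rightarrow> quat" where
  "qof_complex z = (z, 0)"

definition qone :: quat where "qone = (1, 0)"

text \<open>(a + b j)(c + d j) = (a c - b conj d) + (a d + b conj c) j, using j c = conj c j.\<close>
definition qmult :: "quat \<Rightarrow> quat \<Rightarrow> quat" where
  "qmult p q = (fst p * fst q - snd p * cnj (snd q), fst p * snd q + snd p * cnj (fst q))"

definition qcnj :: "quat \<Rightarrow> quat" where
  "qcnj q = (cnj (fst q), - snd q)"

primrec qpow :: "quat \<Rightarrow> nat \<Rightarrow> quat" where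
  "qpow q 0 = qone"
| "qpow q (Suc n) = qmult (qpow q n) q"

definition qnonneg :: "quat \<Rightarrow> bool" where
  "qnonneg q \<longleftrightarrow> snd q = 0 \<and> Im (fst q) = 0 \<and> Re (fst q) \<ge> 0"

text \<open>Quaternionic n x n matrices as functions on indices {0..<n}.\<close>
definition qpsd :: "nat \<Rightarrow> (nat \<Rightarrow> nat \<Rightarrow> quat) \<Rightarrow> bool" where
  "qpsd n A \<longleftrightarrow>
     (\<forall>i<n. \<forall>j<n. A i j = qcnj (A j i)) \<and>
     (\<forall>x :: nat \<Rightarrow> quat. qnonneg (\<Sum>i<n. \<Sum>j<n. qmult (qmult (qcnj (x i)) (A i j)) (x j)))"

definition pick_matrix :: "(quat \<Rightarrow> quat) \<Rightarrow> (nat \<Rightarrow> quat) \<Rightarrow> nat \<Rightarrow> nat \<Rightarrow> quat" where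
  "pick_matrix f z i j =
     (\<Sum>k. qmult (qmult (qpow (z i) k) (qone - qmult (f (z i)) (qcnj (f (z j)))))
                 (qpow (qcnj (z j)) k))"

definition cpsd :: "nat \<Rightarrow> (nat \<Rightarrow> nat \<Rightarrow> complex) \<Rightarrow> bool" where
  "cpsd n A \<longleftrightarrow>
     (\<forall>i<n. \<forall>j<n. A i j = cnj (A j i)) \<and>
     (\<forall>x :: nat \<Rightarrow> complex. Im (\<Sum>i<n. \<Sum>j<n. cnj (x i) * A i j * x j) = 0 \<and>
                              Re (\<Sum>i<n. \<Sum>j<n. cnj (x i) * A i j * x j) \<ge> 0)"

end

theory Submission
  imports Defs
begin

lemma schur_entry0:
  fixes A Ac u vc x yc a ac d1 d2 d3 d4 d5 :: "'a::field"
  assumes "d1 \<noteq> 0" "d2 \<noteq> 0" "d3 \<noteq> 0" "d4 \<noteq> 0" "d5 \<noteq> 0"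
   and "d1 = 1 - x * yc" "d2 = 1 - x * ac" "d3 = 1 - a * yc" "d4 = 1 - a * ac" "d5 = 1 - A * Ac"
  shows "d5 * ((1 - u * vc)/d1 - ((1 - u * Ac)/d2) * ((1 - A * vc)/d3) / (d5/d4))
     = ((1-Ac * u) * ((x-a)/d2) * ((1-A * vc) * ((yc-ac)/d3)) - (u-A) * (vc-Ac))/d1"
proof -
  have "d5 * ((1 - u * vc)/d1 - ((1 - u * Ac)/d2) * ((1 - A * vc)/d3) / (d5/d4)) * (d1*d2*d3)
     = ((1-Ac * u) * ((x-a)/d2) * ((1-A * vc) * ((yc-ac)/d3)) - (u-A) * (vc-Ac))/d1 * (d1*d2*d3)"
    using assms(1-5) apply (simp add: field_simps)
    using assms(6-10) by algebra
  moreover have "d1*d2*d3 \<noteq> 0" using assms(1-3) by simp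
  ultimately show ?thesis by (meson mult_right_cancel)
qed


lemma psd2_det:
  fixes p q r :: complex
  assumes H: "\<And>e1 e2. 0 \<le> Re (cnj e1 * p * e1 + cnj e1 * q * e2 + cnj e2 * cnj q * e1 + cnj e2 * r * e2)"
    and "Im p = 0" "Im r = 0"
  shows "0 \<le> Re p" "0 \<le> Re r" "(cmod q)^2 \<le> Re p * Re r"
proof -
  have pr: "p = of_real (Re p)" "r = of_real (Re r)" using assms(2,3) by (simp_all add: complex_eq_iff)
  have qq: "q * cnj q = of_real ((cmod q)^2)" by (simp add: complex_mult_cnj cmod_power2)
  have f: "0 \<le> s^2 * Re p - 2 * s * (cmod q)^2 + (cmod q)^2 * Re r" for s :: real
  proof -
    obtain qa qb where qd: "q = Complex qa qb" by (cases q)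
    have "Re (cnj (of_real s) * p * of_real s + cnj (of_real s) * q * (- cnj q) + cnj (- cnj q) * cnj q * of_real s
        + cnj (- cnj q) * r * (- cnj q)) = s^2 * Re p - 2 * s * (cmod q)^2 + (cmod q)^2 * Re r"
      using assms(2,3) unfolding qd cmod_power2 by (simp add: power2_eq_square algebra_simps)
    then show ?thesis using H[of "of_real s" "- cnj q"] by simp
  qed
  have g: "0 \<le> Re r" using H[of 0 1] by simp
  have p0: "0 \<le> Re p" using H[of 1 0] by simp
  show "0 \<le> Re p" "0 \<le> Re r" by fact+
  show "(cmod q)^2 \<le> Re p * Re r"
  proof (cases "Re p = 0")
    case True
    have "0 \<le> - 2 * (Re r + 1) * (cmod q)^2 + (cmod q)^2 * Re r" using f[of "Re r + 1"] True by (simp add: algebra_simps)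
    then have "(cmod q)^2 * (Re r + 2) \<le> 0" by (simp add: algebra_simps)
    then have "(cmod q)^2 \<le> 0" using g by (simp add: mult_le_0_iff)
    then show ?thesis using True by simp
  next
    case False
    then have P: "Re p > 0" using p0 by simp
    have "0 \<le> ((cmod q)^2 / Re p)^2 * Re p - 2 * ((cmod q)^2 / Re p) * (cmod q)^2 + (cmod q)^2 * Re r"
      using f by blast
    also have "\<dots> = (cmod q)^2 * (Re p * Re r - (cmod q)^2) / Re p"
      using P by (simp add: field_simps power2_eq_square)
    finally have "0 \<le> (cmod q)^2 * (Re p * Re r - (cmod q)^2)" using P
      by (simp add: zero_le_divide_iff)
    then show ?thesis
      by (cases "q = 0") (use P g in \<open>simp_all add: zero_le_mult_iff\<close>)
  qed
qed

lemma norm_id: "(cmod (1 - u * cnj v))^2 - (1 - (cmod u)^2) * (1 - (cmod v)^2) = (cmod (u - v))^2"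
  unfolding cmod_power2 by (simp add: algebra_simps power2_eq_square)


lemma pick2_lip:
  fixes u v x y :: complex
  assumes x: "cmod x < 1" and y: "cmod y < 1" and u: "cmod u \<le> 1" and v: "cmod v \<le> 1"
    and H: "(cmod (1 - u * cnj v))^2 * ((1 - (cmod x)^2) * (1 - (cmod y)^2))
             \<le> ((1 - (cmod u)^2) * (1 - (cmod v)^2)) * (cmod (1 - x * cnj y))^2"
  shows "cmod (u - v) \<le> 2 * cmod (x - y) / (1 - cmod x * cmod y)"
proof -
  define A where "A = (cmod (1 - u * cnj v))^2"
  define B where "B = (cmod (1 - x * cnj y))^2"
  define U where "U = (1 - (cmod u)^2) * (1 - (cmod v)^2)"
  define X where "X = (1 - (cmod x)^2) * (1 - (cmod y)^2)"
  have xy: "cmod x * cmod y < 1"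
    by (metis x y mult_strict_mono' norm_ge_zero mult_1_right less_le_trans order.refl)
  have "cmod (x * cnj y) < 1" using xy by (simp add: norm_mult)
  have lb: "1 - cmod x * cmod y \<le> cmod (1 - x * cnj y)"
  proof -
    have "cmod (1::complex) - cmod (x * cnj y) \<le> cmod (1 - x * cnj y)" by (rule norm_triangle_ineq2)
    then show ?thesis by (simp add: norm_mult)
  qed
  have Bpos: "(1 - cmod x * cmod y)^2 \<le> B" unfolding B_def
    using lb xy by (simp add: power_mono)
  have Bp: "B > 0" proof -
    have "0 < (1 - cmod x * cmod y)^2" using xy by simp
    then show ?thesis using Bpos by linarith
  qed
  have A4: "A \<le> 4"
  proof -
    have "cmod (1 - u * cnj v) \<le> 1 + cmod u * cmod v"
      using norm_triangle_ineq4[of 1 "u * cnj v"] by (simp add: norm_mult)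
    also have "\<dots> \<le> 2" using mult_le_one[OF u norm_ge_zero v] by simp
    finally have "(cmod (1 - u * cnj v))^2 \<le> 2^2" by (rule power_mono) simp
    then show ?thesis unfolding A_def by simp
  qed
  have A0: "A \<ge> 0" unfolding A_def by simp
  have e1: "(cmod (u - v))^2 = A - U" unfolding A_def U_def using norm_id[of u v] by simp
  have e2: "(cmod (x - y))^2 = B - X" unfolding B_def X_def using norm_id[of x y] by simp
  have HH: "A * X \<le> U * B" using H unfolding A_def B_def U_def X_def .
  have q1: "(cmod (u - v))^2 * B = A*B - U*B" by (simp only: e1) (simp add: algebra_simps)
  have q2: "A * (cmod (x - y))^2 = A*B - A*X" by (simp only: e2) (simp add: algebra_simps)
  have "(cmod (u - v))^2 * B \<le> A * (cmod (x - y))^2"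
    unfolding q1 q2 using HH by linarith
  also have "\<dots> \<le> 4 * (cmod (x - y))^2" using A4 by (simp add: mult_right_mono)
  finally have s1: "(cmod (u - v))^2 * B \<le> 4 * (cmod (x - y))^2" .
  have "(cmod (u - v))^2 * (1 - cmod x * cmod y)^2 \<le> (cmod (u - v))^2 * B"
    using Bpos by (simp add: mult_left_mono)
  with s1 have s2: "(cmod (u - v))^2 * (1 - cmod x * cmod y)^2 \<le> 4 * (cmod (x - y))^2"
    by linarith
  have "(cmod (u - v) * (1 - cmod x * cmod y))^2 \<le> (2 * cmod (x - y))^2"
    using s2 by (simp only: power_mult_distrib) simp
  then have "cmod (u - v) * (1 - cmod x * cmod y) \<le> 2 * cmod (x - y)"
    by (rule power2_le_imp_le) simp
  moreover have "0 < 1 - cmod x * cmod y" using xy by simp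
  ultimately show ?thesis by (simp add: pos_le_divide_eq)
qed


lemma schur3:
  fixes m00 :: "'a::field"
  assumes "m00 \<noteq> 0" "c0 = -(m01*c1 + m02*c2)/m00"
  shows "d0*m00*c0 + d0*m01*c1 + d0*m02*c2 + d1*m10*c0 + d1*m11*c1 + d1*m12*c2 + d2*m20*c0 + d2*m21*c1 + d2*m22*c2
    = d1*(m11 - m10*m01/m00)*c1 + d1*(m12 - m10*m02/m00)*c2 + d2*(m21-m20*m01/m00)*c1 + d2*(m22 - m20*m02/m00)*c2"
proof -
  have e0: "m00 * c0 = -(m01*c1 + m02*c2)" using assms by simp
  have e: "m00*c0 + m01*c1 + m02*c2 = 0" by (simp add: e0)
  have "d0*m00*c0 + d0*m01*c1 + d0*m02*c2 = d0*(m00*c0 + m01*c1 + m02*c2)" by (simp add: algebra_simps)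
  then have r0: "d0*m00*c0 + d0*m01*c1 + d0*m02*c2 = 0" using e by simp
  have r1: "d1*m10*c0 + d1*m11*c1 + d1*m12*c2 = d1*(m11 - m10*m01/m00)*c1 + d1*(m12 - m10*m02/m00)*c2"
    using assms(1) unfolding assms(2) by (simp add: field_simps)
  have r2: "d2*m20*c0 + d2*m21*c1 + d2*m22*c2 = d2*(m21-m20*m01/m00)*c1 + d2*(m22 - m20*m02/m00)*c2"
    using assms(1) unfolding assms(2) by (simp add: field_simps)
  have sp: "d0*m00*c0 + d0*m01*c1 + d0*m02*c2 + d1*m10*c0 + d1*m11*c1 + d1*m12*c2 + d2*m20*c0 + d2*m21*c1 + d2*m22*c2
    = (d0*m00*c0 + d0*m01*c1 + d0*m02*c2) + (d1*m10*c0 + d1*m11*c1 + d1*m12*c2) + (d2*m20*c0 + d2*m21*c1 + d2*m22*c2)"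
    by (simp only: add.assoc)
  show ?thesis apply (subst sp) apply (subst r0) apply (subst r1) apply (subst r2) by (simp only: add_0_left add.assoc)
qed

lemma mult_cnj_real: "u * cnj u = complex_of_real ((cmod u)^2)"
  by (rule complex_norm_square[symmetric])

lemma kern_lip:
  fixes x y u v :: complex
  assumes x: "cmod x < 1" and y: "cmod y < 1"
    and H: "\<And>e1 e2. 0 \<le> Re (cnj e1 * ((1 - u * cnj u)/(1 - x * cnj x)) * e1
       + cnj e1 * ((1 - u * cnj v)/(1 - x * cnj y)) * e2
       + cnj e2 * ((1 - v * cnj u)/(1 - y * cnj x)) * e1
       + cnj e2 * ((1 - v * cnj v)/(1 - y * cnj y)) * e2)"
  shows "cmod u \<le> 1" "cmod v \<le> 1" "cmod (u - v) \<le> 2 * cmod (x - y) / (1 - cmod x * cmod y)"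
proof -
  define q where "q = (1 - u * cnj v)/(1 - x * cnj y)"
  have pu: "(1 - u * cnj u)/(1 - x * cnj x) = of_real ((1 - (cmod u)^2) / (1 - (cmod x)^2))"
    by (simp add: mult_cnj_real)
  have pv: "(1 - v * cnj v)/(1 - y * cnj y) = of_real ((1 - (cmod v)^2) / (1 - (cmod y)^2))"
    by (simp add: mult_cnj_real)
  have cq: "(1 - v * cnj u)/(1 - y * cnj x) = cnj q" unfolding q_def by (simp add: mult.commute)
  have H2: "0 \<le> Re (cnj e1 * of_real ((1 - (cmod u)^2) / (1 - (cmod x)^2)) * e1 + cnj e1 * q * e2
     + cnj e2 * cnj q * e1 + cnj e2 * of_real ((1 - (cmod v)^2) / (1 - (cmod y)^2)) * e2)" for e1 e2
    using H[of e1 e2] unfolding pu pv cq q_def .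
  note D = psd2_det[OF H2, simplified]
  have x2: "(cmod x)^2 < 1" using x by (simp add: power_less_one_iff abs_square_less_1)
  have y2: "(cmod y)^2 < 1" using y by (simp add: abs_square_less_1)
  have u2: "(cmod u)^2 \<le> 1" using D(1) x2 by (simp add: zero_le_divide_iff)
  have v2: "(cmod v)^2 \<le> 1" using D(2) y2 by (simp add: zero_le_divide_iff)
  show u1: "cmod u \<le> 1" using u2 by (simp add: abs_square_le_1)
  show v1: "cmod v \<le> 1" using v2 by (simp add: abs_square_le_1)
  have xy0: "1 - x * cnj y \<noteq> 0"
  proof
    assume "1 - x * cnj y = 0"
    then have "cmod (x * cnj y) = 1" by (metis eq_iff_diff_eq_0 norm_one)
    moreover have "cmod (x * cnj y) < 1" using x y
      by (simp add: norm_mult) (metis mult_strict_mono' norm_ge_zero mult_1_right)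
    ultimately show False by simp
  qed
  have nq: "(cmod q)^2 = (cmod (1 - u * cnj v))^2 / (cmod (1 - x * cnj y))^2"
    unfolding q_def by (simp add: norm_divide power_divide)
  define A where "A = (cmod (1 - u * cnj v))^2"
  define B where "B = (cmod (1 - x * cnj y))^2"
  define X1 where "X1 = 1 - (cmod x)^2"
  define Y1 where "Y1 = 1 - (cmod y)^2"
  define U1 where "U1 = 1 - (cmod u)^2"
  define V1 where "V1 = 1 - (cmod v)^2"
  have Bp: "B > 0" unfolding B_def using xy0 by simp
  have XY: "X1 * Y1 > 0" unfolding X1_def Y1_def using x2 y2 by simp
  with D(3) nq have "A / B \<le> (U1 / X1) * (V1 / Y1)"
    unfolding A_def B_def U1_def V1_def X1_def Y1_def by simp
  also have "\<dots> = (U1 * V1) / (X1 * Y1)" by simp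
  finally have "A \<le> (U1 * V1) / (X1 * Y1) * B" using Bp by (simp add: pos_divide_le_eq)
  also have "\<dots> = (U1 * V1 * B) / (X1 * Y1)" by simp
  finally have "A * (X1 * Y1) \<le> U1 * V1 * B" using XY by (simp add: pos_le_divide_eq)
  then have "(cmod (1 - u * cnj v))^2 * ((1 - (cmod x)^2) * (1 - (cmod y)^2))
             \<le> ((1 - (cmod u)^2) * (1 - (cmod v)^2)) * (cmod (1 - x * cnj y))^2"
    unfolding A_def B_def U1_def V1_def X1_def Y1_def by simp
  then show "cmod (u - v) \<le> 2 * cmod (x - y) / (1 - cmod x * cmod y)"
    by (rule pick2_lip[OF x y u1 v1])
qed


definition Mk :: "(complex \<Rightarrow> complex) \<Rightarrow> complex \<Rightarrow> complex \<Rightarrow> complex" where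
  "Mk \<phi> p q = (1 - \<phi> p * cnj (\<phi> q)) / (1 - p * cnj q)"

definition Q3 :: "(complex \<Rightarrow> complex) \<Rightarrow> complex \<Rightarrow> complex \<Rightarrow> complex \<Rightarrow> complex \<Rightarrow> complex \<Rightarrow> complex \<Rightarrow> complex" where
  "Q3 \<phi> p0 p1 p2 c0 c1 c2 =
     cnj c0 * Mk \<phi> p0 p0 * c0 + cnj c0 * Mk \<phi> p0 p1 * c1 + cnj c0 * Mk \<phi> p0 p2 * c2
   + cnj c1 * Mk \<phi> p1 p0 * c0 + cnj c1 * Mk \<phi> p1 p1 * c1 + cnj c1 * Mk \<phi> p1 p2 * c2
   + cnj c2 * Mk \<phi> p2 p0 * c0 + cnj c2 * Mk \<phi> p2 p1 * c1 + cnj c2 * Mk \<phi> p2 p2 * c2"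

lemma one_minus_ne: "cmod p * cmod q < 1 \<Longrightarrow> 1 - p * q \<noteq> (0::complex)"
proof
  assume "cmod p * cmod q < 1" "1 - p * q = 0"
  then have "p * q = 1" by simp
  then have "cmod p * cmod q = 1" by (metis norm_mult norm_one)
  with \<open>cmod p * cmod q < 1\<close> show False by simp
qed

lemma lt1_mult: "cmod p < 1 \<Longrightarrow> cmod q \<le> 1 \<Longrightarrow> cmod p * cmod q < 1"
proof -
  assume "cmod p < 1" "cmod q \<le> 1"
  then have "cmod p * cmod q \<le> cmod p * 1" by (intro mult_left_mono) auto
  then show ?thesis using \<open>cmod p < 1\<close> by simp
qed

lemma Mk_diag: "Mk \<phi> z z = of_real ((1 - (cmod (\<phi> z))^2) / (1 - (cmod z)^2))"
  by (simp add: Mk_def mult_cnj_real)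

lemma Mk_cnj: "Mk \<phi> q p = cnj (Mk \<phi> p q)"
  by (simp add: Mk_def mult.commute)

locale hyp3 =
  fixes \<phi> :: "complex \<Rightarrow> complex"
  assumes H: "\<And>p0 p1 p2 c0 c1 c2. cmod p0 < 1 \<Longrightarrow> cmod p1 < 1 \<Longrightarrow> cmod p2 < 1 \<Longrightarrow>
                 0 \<le> Re (Q3 \<phi> p0 p1 p2 c0 c1 c2)"
begin

lemma bound: assumes "cmod z < 1" shows "cmod (\<phi> z) \<le> 1"
proof -
  have "0 \<le> Re (Q3 \<phi> z z z 1 0 0)" using H assms by blast
  then have "0 \<le> (1 - (cmod (\<phi> z))^2) / (1 - (cmod z)^2)" by (simp add: Q3_def Mk_diag)
  moreover have "(cmod z)^2 < 1" using assms by (simp add: abs_square_less_1)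
  ultimately have "(cmod (\<phi> z))^2 \<le> 1" by (simp add: zero_le_divide_iff)
  then show ?thesis by (simp add: abs_square_le_1)
qed

lemma two_point:
  assumes "cmod p < 1" "cmod q < 1"
  shows "0 \<le> Re (cnj e1 * Mk \<phi> p p * e1 + cnj e1 * Mk \<phi> p q * e2 + cnj e2 * cnj (Mk \<phi> p q) * e1 + cnj e2 * Mk \<phi> q q * e2)"
proof -
  have "0 \<le> Re (Q3 \<phi> p q q e1 e2 0)" using H assms by blast
  then show ?thesis by (simp add: Q3_def Mk_cnj[of \<phi> q p])
qed

lemma const_case:
  assumes a: "cmod a < 1" and a1: "cmod (\<phi> a) = 1" and z: "cmod z < 1"
  shows "\<phi> z = \<phi> a"
proof -
  have "Im (Mk \<phi> a a) = 0" "Im (Mk \<phi> z z) = 0" by (simp_all add: Mk_diag)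
  note D = psd2_det[OF two_point[OF a z] this]
  have "Re (Mk \<phi> a a) = 0" using a1 by (simp add: Mk_diag)
  with D(3) have "Mk \<phi> a z = 0" by simp
  moreover have "1 - a * cnj z \<noteq> 0" using one_minus_ne[of a "cnj z"] lt1_mult[of a "cnj z"] a z by simp
  ultimately have e: "\<phi> a * cnj (\<phi> z) = 1" by (simp add: Mk_def)
  have aa: "\<phi> a * cnj (\<phi> a) = 1" using a1 by (simp add: mult_cnj_real)
  have "cnj (\<phi> a) = cnj (\<phi> a) * (\<phi> a * cnj (\<phi> z))" using e by simp
  also have "\<dots> = (\<phi> a * cnj (\<phi> a)) * cnj (\<phi> z)" by (simp add: algebra_simps)
  also have "\<dots> = cnj (\<phi> z)" using aa by simp
  finally show ?thesis by (metis complex_cnj_cnj)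
qed

end


lemma entry_gen:
  fixes \<phi> :: "complex \<Rightarrow> complex"
  assumes a: "cmod a < 1" and i: "cmod i < 1" and j: "cmod j < 1" and al: "cmod \<alpha> < 1"
    and ai: "\<alpha> = \<phi> a"
    and pI0: "pI = (1 - cnj \<alpha> * \<phi> i) * ((i - a)/(1 - cnj a * i))"
    and pJ0: "pJ = (1 - cnj \<alpha> * \<phi> j) * ((j - a)/(1 - cnj a * j))"
    and sI: "sI * pI = \<phi> i - \<alpha>" and sJ: "sJ * pJ = \<phi> j - \<alpha>"
  shows "(1 - \<alpha> * cnj \<alpha>) * (Mk \<phi> i j - Mk \<phi> i a * Mk \<phi> a j / Mk \<phi> a a)
       = pI * ((1 - sI * cnj sJ)/(1 - i * cnj j)) * cnj pJ"
proof -
  have pI: "pI = (1 - cnj \<alpha> * \<phi> i) * ((i - a)/(1 - i * cnj a))" using pI0 by (simp add: mult.commute)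
  have pJ: "pJ = (1 - cnj \<alpha> * \<phi> j) * ((j - a)/(1 - j * cnj a))" using pJ0 by (simp add: mult.commute)
  have ne: "1 - p * cnj q \<noteq> 0" if "cmod p < 1" "cmod q < 1" for p q
    using one_minus_ne[of p "cnj q"] lt1_mult[of p "cnj q"] that by simp
  have n5: "1 - \<alpha> * cnj \<alpha> \<noteq> 0" using ne[OF al al] .
  have S: "(1 - \<alpha> * cnj \<alpha>) * ((1 - \<phi> i * cnj (\<phi> j))/(1 - i * cnj j)
      - ((1 - \<phi> i * cnj \<alpha>)/(1 - i * cnj a)) * ((1 - \<alpha> * cnj (\<phi> j))/(1 - a * cnj j))
        / ((1 - \<alpha> * cnj \<alpha>)/(1 - a * cnj a)))
     = ((1 - cnj \<alpha> * \<phi> i) * ((i - a)/(1 - i * cnj a)) * ((1 - \<alpha> * cnj (\<phi> j)) * ((cnj j - cnj a)/(1 - a * cnj j)))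
        - (\<phi> i - \<alpha>) * (cnj (\<phi> j) - cnj \<alpha>))/(1 - i * cnj j)"
    by (rule schur_entry0) (use ne a i j n5 in auto)
  have cpj: "cnj pJ = (1 - \<alpha> * cnj (\<phi> j)) * ((cnj j - cnj a)/(1 - a * cnj j))"
    unfolding pJ by (simp add: mult.commute)
  have csj: "cnj sJ * cnj pJ = cnj (\<phi> j) - cnj \<alpha>" using sJ by (metis complex_cnj_diff complex_cnj_mult)
  have "pI * ((1 - sI * cnj sJ)/(1 - i * cnj j)) * cnj pJ
      = (pI * cnj pJ - (sI * pI) * (cnj sJ * cnj pJ))/(1 - i * cnj j)"
    by (simp add: algebra_simps)
  also have "\<dots> = ((1 - cnj \<alpha> * \<phi> i) * ((i - a)/(1 - i * cnj a)) * ((1 - \<alpha> * cnj (\<phi> j)) * ((cnj j - cnj a)/(1 - a * cnj j)))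
        - (\<phi> i - \<alpha>) * (cnj (\<phi> j) - cnj \<alpha>))/(1 - i * cnj j)"
    unfolding sI csj unfolding cpj pI ..
  finally have F: "pI * ((1 - sI * cnj sJ)/(1 - i * cnj j)) * cnj pJ = ((1 - cnj \<alpha> * \<phi> i) * ((i - a)/(1 - i * cnj a)) * ((1 - \<alpha> * cnj (\<phi> j)) * ((cnj j - cnj a)/(1 - a * cnj j)))
        - (\<phi> i - \<alpha>) * (cnj (\<phi> j) - cnj \<alpha>))/(1 - i * cnj j)" .
  have G: "(1 - \<alpha> * cnj \<alpha>) * (Mk \<phi> i j - Mk \<phi> i a * Mk \<phi> a j / Mk \<phi> a a) =
     (1 - \<alpha> * cnj \<alpha>) * ((1 - \<phi> i * cnj (\<phi> j))/(1 - i * cnj j)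
      - ((1 - \<phi> i * cnj \<alpha>)/(1 - i * cnj a)) * ((1 - \<alpha> * cnj (\<phi> j))/(1 - a * cnj j))
        / ((1 - \<alpha> * cnj \<alpha>)/(1 - a * cnj a)))"
    by (simp only: Mk_def ai)
  show ?thesis by (rule trans[OF G trans[OF S F[symmetric]]])
qed

lemma fL1: "t \<noteq> 0 \<Longrightarrow> (N * w / (m * t)) * t = N * w / (m::'a::field)"
  by (cases "m = 0") (simp_all add: field_simps)
lemma fL3: "d \<noteq> 0 \<Longrightarrow> w \<noteq> 0 \<Longrightarrow> m \<noteq> 0 \<Longrightarrow> s * d / (w * d / m) = s * m / (w::'a::field)"
  by (simp add: field_simps)
lemma fL4: "m \<noteq> 0 \<Longrightarrow> w \<noteq> 0 \<Longrightarrow> t \<noteq> 0 \<Longrightarrow> (N * w / (m * t)) * m / w = N / (t::'a::field)"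
  by (simp add: field_simps)
lemma fL2: "m \<noteq> 0 \<Longrightarrow> t \<noteq> 0 \<Longrightarrow> w \<noteq> 0 \<Longrightarrow> (N * w / (m * t)) * (m * (t / w)) = (N::'a::field)"
  by (simp add: field_simps)
lemma fL5: "m \<noteq> 0 \<Longrightarrow> w + c * (N * w / m) = w * (m + c * N) / (m::'a::field)"
  by (simp add: field_simps)

lemma dq_identity:
  fixes u A Ac ac x a :: complex
  assumes n1: "1 - Ac * u \<noteq> 0" and n2: "x - a \<noteq> 0" and n3: "1 - ac * x \<noteq> 0" and n4: "1 - A * Ac \<noteq> 0"
    and s: "s = (u - A) * (1 - ac * x) / ((1 - Ac * u) * (x - a))"
  shows "(u - A)/(x - a) = s * (1 - A * Ac) / ((1 - ac * x) + Ac * s * (x - a))"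
proof -
  have sx: "s * (x - a) = (u - A) * (1 - ac * x) / (1 - Ac * u)"
    unfolding s using n2 by (rule fL1)
  have "(1 - ac * x) + Ac * s * (x - a) = (1 - ac * x) + Ac * ((u - A) * (1 - ac * x) / (1 - Ac * u))"
    using sx by (simp add: mult.assoc)
  also have "\<dots> = (1 - ac * x) * ((1 - Ac * u) + Ac * (u - A)) / (1 - Ac * u)"
    using n1 by (rule fL5)
  also have "(1 - Ac * u) + Ac * (u - A) = 1 - A * Ac" by (simp add: algebra_simps)
  finally have den: "(1 - ac * x) + Ac * s * (x - a) = (1 - ac * x) * (1 - A * Ac) / (1 - Ac * u)" .
  have "s * (1 - A * Ac) / ((1 - ac * x) + Ac * s * (x - a)) = s * (1 - Ac * u) / (1 - ac * x)"
    unfolding den using n4 n3 n1 by (rule fL3)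
  also have "\<dots> = (u - A) / (x - a)" unfolding s using n1 n3 n2 by (rule fL4)
  finally show ?thesis by simp
qed

context hyp3 begin

lemma claimA:
  assumes a: "cmod a < 1" and x: "cmod x < 1" and y: "cmod y < 1" and xa: "x \<noteq> a" and ya: "y \<noteq> a"
    and al: "cmod (\<phi> a) < 1"
    and psi: "\<And>z. \<psi> z = (\<phi> z - \<phi> a) * (1 - cnj a * z) / ((1 - cnj (\<phi> a) * \<phi> z) * (z - a))"
  shows "0 \<le> Re (cnj e1 * ((1 - \<psi> x * cnj (\<psi> x))/(1 - x * cnj x)) * e1
       + cnj e1 * ((1 - \<psi> x * cnj (\<psi> y))/(1 - x * cnj y)) * e2
       + cnj e2 * ((1 - \<psi> y * cnj (\<psi> x))/(1 - y * cnj x)) * e1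
       + cnj e2 * ((1 - \<psi> y * cnj (\<psi> y))/(1 - y * cnj y)) * e2)"
proof -
  define \<alpha> where "\<alpha> = \<phi> a"
  define p where "p z = (1 - cnj \<alpha> * \<phi> z) * ((z - a)/(1 - cnj a * z))" for z
  define K where "K z w = (1 - \<psi> z * cnj (\<psi> w))/(1 - z * cnj w)" for z w
  have ne: "1 - p * cnj q \<noteq> 0" if "cmod p < 1" "cmod q < 1" for p q
    using one_minus_ne[of p "cnj q"] lt1_mult[of p "cnj q"] that by simp
  have al': "cmod \<alpha> < 1" using al \<alpha>_def by simp
  have facts: "p z \<noteq> 0 \<and> \<psi> z * p z = \<phi> z - \<alpha>" if z: "cmod z < 1" "z \<noteq> a" for z
  proof -
    have n1: "1 - cnj \<alpha> * \<phi> z \<noteq> 0"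
      using one_minus_ne[of "cnj \<alpha>" "\<phi> z"] lt1_mult[of "cnj \<alpha>" "\<phi> z"] al' bound[OF z(1)] by simp
    have n2: "z - a \<noteq> 0" using z by simp
    have n3: "1 - z * cnj a \<noteq> 0" using ne[OF z(1) a] .
    have n3': "1 - cnj a * z \<noteq> 0" using n3 by (simp add: mult.commute)
    have "p z \<noteq> 0" unfolding p_def using n1 n2 n3' by simp
    moreover have "\<psi> z * p z = \<phi> z - \<alpha>" unfolding p_def psi \<alpha>_def[symmetric]
      using n1 n2 n3' by (rule fL2)
    ultimately show ?thesis ..
  qed
  have E: "(1 - \<alpha> * cnj \<alpha>) * (Mk \<phi> i j - Mk \<phi> i a * Mk \<phi> a j / Mk \<phi> a a) = p i * K i j * cnj (p j)"
    if "cmod i < 1" "cmod j < 1" "i \<noteq> a" "j \<noteq> a" for i j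
    unfolding K_def
    by (rule entry_gen[OF a that(1,2) al' \<alpha>_def p_def p_def]) (use facts that in auto)
  define c1 where "c1 = e1 / cnj (p x)"
  define c2 where "c2 = e2 / cnj (p y)"
  define c0 where "c0 = - (Mk \<phi> a x * c1 + Mk \<phi> a y * c2) / Mk \<phi> a a"
  have Maa: "Mk \<phi> a a \<noteq> 0"
  proof -
    have "(cmod (\<phi> a))^2 < 1" "(cmod a)^2 < 1" using al a by (simp_all add: abs_square_less_1)
    then have r: "(1 - (cmod (\<phi> a))^2) / (1 - (cmod a)^2) \<noteq> 0" by simp
    then show ?thesis unfolding Mk_diag by (metis of_real_eq_0_iff)
  qed
  have HQ: "0 \<le> Re (Q3 \<phi> a x y c0 c1 c2)" using H a x y by blast
  have Qs: "Q3 \<phi> a x y c0 c1 c2 =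
      cnj c1 * (Mk \<phi> x x - Mk \<phi> x a * Mk \<phi> a x / Mk \<phi> a a) * c1
    + cnj c1 * (Mk \<phi> x y - Mk \<phi> x a * Mk \<phi> a y / Mk \<phi> a a) * c2
    + cnj c2 * (Mk \<phi> y x - Mk \<phi> y a * Mk \<phi> a x / Mk \<phi> a a) * c1
    + cnj c2 * (Mk \<phi> y y - Mk \<phi> y a * Mk \<phi> a y / Mk \<phi> a a) * c2"
    unfolding Q3_def by (rule schur3[OF Maa c0_def])
  have px: "p x \<noteq> 0" and py: "p y \<noteq> 0" using facts x y xa ya by auto
  have T: "cnj (e / cnj P) * (P * k * cnj R) * (f / cnj R) = cnj e * k * f" if "P \<noteq> 0" "R \<noteq> 0" for e f k P R
    using that by (simp add: field_simps)
  define d where "d = 1 - \<alpha> * cnj \<alpha>"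
  have "d * Q3 \<phi> a x y c0 c1 c2 =
      cnj c1 * (d * (Mk \<phi> x x - Mk \<phi> x a * Mk \<phi> a x / Mk \<phi> a a)) * c1
    + cnj c1 * (d * (Mk \<phi> x y - Mk \<phi> x a * Mk \<phi> a y / Mk \<phi> a a)) * c2
    + cnj c2 * (d * (Mk \<phi> y x - Mk \<phi> y a * Mk \<phi> a x / Mk \<phi> a a)) * c1
    + cnj c2 * (d * (Mk \<phi> y y - Mk \<phi> y a * Mk \<phi> a y / Mk \<phi> a a)) * c2"
    unfolding Qs by (simp add: algebra_simps)
  also have "\<dots> = cnj c1 * (p x * K x x * cnj (p x)) * c1 + cnj c1 * (p x * K x y * cnj (p y)) * c2
     + cnj c2 * (p y * K y x * cnj (p x)) * c1 + cnj c2 * (p y * K y y * cnj (p y)) * c2"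
    unfolding d_def using E x y xa ya by simp
  also have "\<dots> = cnj e1 * K x x * e1 + cnj e1 * K x y * e2 + cnj e2 * K y x * e1 + cnj e2 * K y y * e2"
    unfolding c1_def c2_def using T[OF px px] T[OF px py] T[OF py px] T[OF py py] by simp
  finally have eq: "d * Q3 \<phi> a x y c0 c1 c2 = cnj e1 * K x x * e1 + cnj e1 * K x y * e2 + cnj e2 * K y x * e1 + cnj e2 * K y y * e2" .
  have dr: "d = of_real (1 - (cmod \<alpha>)^2)" unfolding d_def by (simp add: mult_cnj_real)
  have "0 \<le> (1 - (cmod \<alpha>)^2) * Re (Q3 \<phi> a x y c0 c1 c2)"
  proof -
    have "(cmod \<alpha>)^2 < 1" using al' by (simp add: abs_square_less_1)
    then show ?thesis using HQ by (intro mult_nonneg_nonneg) auto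
  qed
  also have "\<dots> = Re (d * Q3 \<phi> a x y c0 c1 c2)" unfolding dr by simp
  finally show ?thesis unfolding eq K_def .
qed

end


context hyp3 begin

lemma diff_at:
  assumes a: "cmod a < 1" and al: "cmod (\<phi> a) < 1"
  shows "\<phi> field_differentiable (at a)"
proof -
  define \<alpha> where "\<alpha> = \<phi> a"
  define \<psi> where "\<psi> z = (\<phi> z - \<phi> a) * (1 - cnj a * z) / ((1 - cnj (\<phi> a) * \<phi> z) * (z - a))" for z
  define r where "r = (1 - cmod a) / 2"
  define \<rho> where "\<rho> = (1 + cmod a) / 2"
  define S where "S = ball a r - {a}"
  define C where "C = 2 / (1 - \<rho>^2)"
  have r0: "r > 0" unfolding r_def using a by simp
  have \<rho>1: "\<rho> < 1" unfolding \<rho>_def using a by simp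
  have \<rho>0: "0 \<le> \<rho>" unfolding \<rho>_def by simp
  have \<rho>2: "\<rho>^2 < 1" using \<rho>1 \<rho>0 by (simp add: abs_square_less_1)
  have inS: "cmod z < \<rho> \<and> z \<noteq> a" if "z \<in> S" for z
  proof -
    have "cmod z \<le> cmod a + cmod (a - z)" using norm_triangle_ineq4[of a "a - z"] by simp
    moreover have "cmod (a - z) < r" using that unfolding S_def by (simp add: dist_norm)
    ultimately show ?thesis using that unfolding S_def r_def \<rho>_def by auto
  qed
  have psi: "\<And>z. \<psi> z = (\<phi> z - \<phi> a) * (1 - cnj a * z) / ((1 - cnj (\<phi> a) * \<phi> z) * (z - a))"
    by (simp add: \<psi>_def)
  have lip: "cmod (\<psi> z - \<psi> w) \<le> C * cmod (z - w)" if "z \<in> S" "w \<in> S" for z w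
  proof -
    have z: "cmod z < \<rho>" "z \<noteq> a" and w: "cmod w < \<rho>" "w \<noteq> a" using inS that by auto
    have z1: "cmod z < 1" and w1: "cmod w < 1" using z w \<rho>1 by auto
    have K: "cmod (\<psi> z - \<psi> w) \<le> 2 * cmod (z - w) / (1 - cmod z * cmod w)"
      by (rule kern_lip(3)[OF z1 w1 claimA[OF a z1 w1 z(2) w(2) al psi]])
    have "cmod z * cmod w \<le> \<rho> * \<rho>" using z w \<rho>0 by (intro mult_mono) auto
    then have b: "1 - \<rho>^2 \<le> 1 - cmod z * cmod w" by (simp add: power2_eq_square)
    have "2 * cmod (z - w) / (1 - cmod z * cmod w) \<le> 2 * cmod (z - w) / (1 - \<rho>^2)"
      using b \<rho>2 by (intro divide_left_mono) (auto intro: mult_pos_pos)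
    also have "\<dots> = C * cmod (z - w)" unfolding C_def by simp
    finally show ?thesis using K by linarith
  qed
  have "C-lipschitz_on S \<psi>"
    unfolding lipschitz_on_def C_def using lip \<rho>2 by (auto simp: dist_norm C_def)
  then have uc: "uniformly_continuous_on S \<psi>" by (rule lipschitz_on_uniformly_continuous)
  have cl: "a \<in> closure S"
  proof -
    have "a islimpt ball a r" using r0 by (simp add: islimpt_ball)
    then show ?thesis unfolding S_def by (simp add: islimpt_in_closure)
  qed
  obtain L where L: "(\<psi> \<longlongrightarrow> L) (at a within S)"
    using uniformly_continuous_on_extension_at_closure[OF uc cl] by blast
  have "at a within S = at a within ball a r" unfolding S_def at_within_def by simp
  also have "\<dots> = at a" using r0 by (intro at_within_open) auto
  finally have L': "(\<psi> \<longlongrightarrow> L) (at a)" using L by simp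
  define Dq where "Dq z = \<psi> z * (1 - \<alpha> * cnj \<alpha>) / ((1 - cnj a * z) + cnj \<alpha> * \<psi> z * (z - a))" for z
  have aa: "1 - cnj a * a \<noteq> 0" using one_minus_ne[of "cnj a" a] lt1_mult[of "cnj a" a] a by simp
  have lim: "(Dq \<longlongrightarrow> L * (1 - \<alpha> * cnj \<alpha>) / ((1 - cnj a * a) + cnj \<alpha> * L * (a - a))) (at a)"
    unfolding Dq_def using aa by (intro tendsto_intros L') auto
  have ev: "eventually (\<lambda>z. Dq z = (\<phi> z - \<phi> a) / (z - a)) (at a)"
    unfolding eventually_at
  proof (intro exI[of _ r] conjI ballI impI)
    show "r > 0" by fact
    fix z assume "z \<in> UNIV" "z \<noteq> a \<and> dist z a < r"
    then have za: "z \<noteq> a" and d: "cmod (z - a) < r" by (auto simp: dist_norm)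
    have "cmod z \<le> cmod a + cmod (z - a)" using norm_triangle_ineq[of a "z - a"] by simp
    then have z1: "cmod z < 1" using d a unfolding r_def by (simp add: field_simps)
    have al': "cmod \<alpha> < 1" using al \<alpha>_def by simp
    have n1: "1 - cnj \<alpha> * \<phi> z \<noteq> 0"
      using one_minus_ne[of "cnj \<alpha>" "\<phi> z"] lt1_mult[of "cnj \<alpha>" "\<phi> z"] al' bound[OF z1] by simp
    have n3: "1 - cnj a * z \<noteq> 0" using one_minus_ne[of "cnj a" z] lt1_mult[of "cnj a" z] a z1 by simp
    have n4: "1 - \<alpha> * cnj \<alpha> \<noteq> 0" using one_minus_ne[of \<alpha> "cnj \<alpha>"] lt1_mult[of \<alpha> "cnj \<alpha>"] al' by simp
    have n2: "z - a \<noteq> 0" using za by simp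
    have sd: "\<psi> z = (\<phi> z - \<alpha>) * (1 - cnj a * z) / ((1 - cnj \<alpha> * \<phi> z) * (z - a))"
      using psi[of z] by (simp only: \<alpha>_def)
    have "(\<phi> z - \<alpha>) / (z - a) = \<psi> z * (1 - \<alpha> * cnj \<alpha>) / ((1 - cnj a * z) + cnj \<alpha> * \<psi> z * (z - a))"
      by (rule dq_identity[where u="\<phi> z" and A=\<alpha> and Ac="cnj \<alpha>" and ac="cnj a" and x=z and a=a and s="\<psi> z", OF n1 n2 n3 n4 sd])
    then show "Dq z = (\<phi> z - \<phi> a) / (z - a)"
      unfolding Dq_def \<alpha>_def[symmetric] by (rule sym)
  qed
  have "((\<lambda>z. (\<phi> z - \<phi> a) / (z - a)) \<longlongrightarrow> L * (1 - \<alpha> * cnj \<alpha>) / ((1 - cnj a * a) + cnj \<alpha> * L * (a - a))) (at a)"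
    by (rule Lim_transform_eventually[OF lim ev])
  then have "(\<phi> has_field_derivative (L * (1 - \<alpha> * cnj \<alpha>) / ((1 - cnj a * a) + cnj \<alpha> * L * (a - a)))) (at a)"
    unfolding has_field_derivative_iff .
  then show ?thesis unfolding field_differentiable_def by (rule exI)
qed

lemma holo: "\<phi> holomorphic_on ball 0 1"
proof (cases "\<exists>a. cmod a < 1 \<and> cmod (\<phi> a) = 1")
  case True
  then obtain a where a: "cmod a < 1" "cmod (\<phi> a) = 1" by blast
  have "(\<lambda>z. \<phi> a) holomorphic_on ball 0 1" by (rule holomorphic_on_const)
  then show ?thesis
  proof (rule holomorphic_transform)
    fix x assume "x \<in> ball (0::complex) 1"
    then have "cmod x < 1" by (simp add: dist_norm)
    then have "\<phi> x = \<phi> a" by (rule const_case[OF a])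
    then show "\<phi> a = \<phi> x" by (rule sym)
  qed
next
  case False
  show ?thesis unfolding holomorphic_on_def
  proof
    fix z assume "z \<in> ball (0::complex) 1"
    then have z: "cmod z < 1" by (simp add: dist_norm)
    have "cmod (\<phi> z) \<noteq> 1" using False z by blast
    then have lt: "cmod (\<phi> z) < 1" using bound[OF z] by linarith
    show "\<phi> field_differentiable (at z within ball 0 1)"
      by (rule field_differentiable_at_within[OF diff_at[OF z lt]])
  qed
qed

lemma into_disk: "\<phi> ` ball 0 1 \<subseteq> cball 0 1"
  using bound by (auto simp: dist_norm)

end


lemma qpow_of_complex: "qpow (qof_complex z) k = (z^k, 0)"
  by (induction k) (simp_all add: qof_complex_def qone_def qmult_def)

lemma sums_pair:
  assumes "a sums A" "b sums B"
  shows "(\<lambda>k. (a k, b k)) sums (A, B)"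
proof -
  have "(\<lambda>n. (\<Sum>k<n. a k, \<Sum>k<n. b k)) \<longlonglongrightarrow> (A, B)"
    using assms unfolding sums_def by (intro tendsto_Pair)
  then show ?thesis unfolding sums_def by (simp add: sum_prod)
qed

lemma pick_entry:
  assumes z: "cmod (\<zeta> i) < 1" and w: "cmod (\<zeta> j) < 1"
  shows "pick_matrix f (\<lambda>i. qof_complex (\<zeta> i)) i j =
    (fst (qone - qmult (f (qof_complex (\<zeta> i))) (qcnj (f (qof_complex (\<zeta> j))))) / (1 - \<zeta> i * cnj (\<zeta> j)),
     snd (qone - qmult (f (qof_complex (\<zeta> i))) (qcnj (f (qof_complex (\<zeta> j))))) / (1 - \<zeta> i * \<zeta> j))"
proof -
  define E where "E = qone - qmult (f (qof_complex (\<zeta> i))) (qcnj (f (qof_complex (\<zeta> j))))"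
  have t: "qmult (qmult (qpow (qof_complex (\<zeta> i)) k) E) (qpow (qcnj (qof_complex (\<zeta> j))) k)
     = (fst E * (\<zeta> i * cnj (\<zeta> j))^k, snd E * (\<zeta> i * \<zeta> j)^k)" for k
  proof -
    have "qcnj (qof_complex (\<zeta> j)) = qof_complex (cnj (\<zeta> j))" by (simp add: qcnj_def qof_complex_def)
    then show ?thesis
      by (simp add: qpow_of_complex qmult_def power_mult_distrib algebra_simps)
  qed
  have n1: "cmod (\<zeta> i * cnj (\<zeta> j)) < 1" using z w lt1_mult[of "\<zeta> i" "cnj (\<zeta> j)"] by (simp add: norm_mult)
  have n2: "cmod (\<zeta> i * \<zeta> j) < 1" using z w lt1_mult[of "\<zeta> i" "\<zeta> j"] by (simp add: norm_mult)
  have "(\<lambda>k. (fst E * (\<zeta> i * cnj (\<zeta> j))^k, snd E * (\<zeta> i * \<zeta> j)^k)) sums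
      (fst E * (1 / (1 - \<zeta> i * cnj (\<zeta> j))), snd E * (1 / (1 - \<zeta> i * \<zeta> j)))"
    by (intro sums_pair sums_mult geometric_sums n1 n2)
  then have "pick_matrix f (\<lambda>i. qof_complex (\<zeta> i)) i j = (fst E * (1 / (1 - \<zeta> i * cnj (\<zeta> j))), snd E * (1 / (1 - \<zeta> i * \<zeta> j)))"
    unfolding pick_matrix_def E_def[symmetric] t by (rule sums_unique[symmetric])
  then show ?thesis unfolding E_def by simp
qed

lemma szego:
  assumes "finite I" "\<And>i. i \<in> I \<Longrightarrow> cmod (p i) < 1"
  shows "0 \<le> Re (\<Sum>i\<in>I. \<Sum>j\<in>I. cnj (y i) * (1 / (1 - p i * cnj (p j))) * y j)"
proof -
  have s: "(\<lambda>k. cnj (y i) * (p i * cnj (p j))^k * y j) sums (cnj (y i) * (1 / (1 - p i * cnj (p j))) * y j)"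
    if "i \<in> I" "j \<in> I" for i j
  proof -
    have "cmod (p i * cnj (p j)) < 1"
      using assms(2)[OF that(1)] assms(2)[OF that(2)] lt1_mult[of "p i" "cnj (p j)"] by (simp add: norm_mult)
    then show ?thesis by (intro sums_mult sums_mult2 geometric_sums)
  qed
  have S: "(\<lambda>k. \<Sum>i\<in>I. \<Sum>j\<in>I. cnj (y i) * (p i * cnj (p j))^k * y j) sums
           (\<Sum>i\<in>I. \<Sum>j\<in>I. cnj (y i) * (1 / (1 - p i * cnj (p j))) * y j)"
    by (intro sums_sum s)
  define w where "w k = (\<Sum>j\<in>I. cnj (p j)^k * y j)" for k
  have T: "(\<Sum>i\<in>I. \<Sum>j\<in>I. cnj (y i) * (p i * cnj (p j))^k * y j) = cnj (w k) * w k" for k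
    unfolding w_def by (simp add: sum_distrib_left sum_distrib_right power_mult_distrib algebra_simps)
  have R: "(\<lambda>k. Re (cnj (w k) * w k)) sums Re (\<Sum>i\<in>I. \<Sum>j\<in>I. cnj (y i) * (1 / (1 - p i * cnj (p j))) * y j)"
    using sums_Re[OF S] unfolding T .
  have nn: "0 \<le> Re (cnj (w k) * w k)" for k by (simp add: mult.commute[of "cnj _"] mult_cnj_real)
  have sm: "summable (\<lambda>k. Re (cnj (w k) * w k))" using R by (rule sums_summable)
  have "0 \<le> (\<Sum>k. Re (cnj (w k) * w k))" by (rule suminf_nonneg[OF sm nn])
  then show ?thesis using sums_unique[OF R] by simp
qed


lemma sum3: "(\<Sum>i<(3::nat). F i) = F 0 + F 1 + (F 2 :: complex)"
  by (simp add: numeral_3_eq_3 numeral_2_eq_2)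

lemma part1:
  fixes f :: "quat \<Rightarrow> quat" and g h :: "complex \<Rightarrow> complex"
  assumes pick3: "\<And>\<zeta> :: nat \<Rightarrow> complex. (\<forall>i<3. \<zeta> i \<in> ball 0 1) \<Longrightarrow>
                    qpsd 3 (pick_matrix f (\<lambda>i. qof_complex (\<zeta> i)))"
    and g: "\<And>z. g z = fst (f (qof_complex z))" and h: "\<And>z. h z = snd (f (qof_complex z))"
    and z: "\<forall>i<3. \<zeta> i \<in> ball 0 1"
  shows "cpsd 3 (\<lambda>i j. (1 - g (\<zeta> i) * cnj (g (\<zeta> j)) - h (\<zeta> i) * cnj (h (\<zeta> j))) / (1 - \<zeta> i * cnj (\<zeta> j)))"
proof -
  define P where "P = pick_matrix f (\<lambda>i. qof_complex (\<zeta> i))"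
  define M where "M i j = (1 - g (\<zeta> i) * cnj (g (\<zeta> j)) - h (\<zeta> i) * cnj (h (\<zeta> j))) / (1 - \<zeta> i * cnj (\<zeta> j))" for i j
  have Q: "qpsd 3 P" unfolding P_def by (rule pick3[OF z])
  have n: "cmod (\<zeta> i) < 1" if "i < 3" for i using z that by (auto simp: dist_norm)
  have fstP: "fst (P i j) = M i j" if "i < 3" "j < 3" for i j
  proof -
    have fq: "f (qof_complex w) = (g w, h w)" for w by (simp add: g h)
    show ?thesis unfolding P_def pick_entry[OF n[OF that(1)] n[OF that(2)]] M_def
      by (simp add: fq qone_def qmult_def qcnj_def)
  qed
  show ?thesis unfolding cpsd_def M_def[symmetric]
  proof (intro conjI allI impI)
    fix i j :: nat assume ij: "i < 3" "j < 3"
    have "P i j = qcnj (P j i)" using Q ij unfolding qpsd_def by blast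
    then have "fst (P i j) = cnj (fst (P j i))" by (simp add: qcnj_def)
    then show "M i j = cnj (M j i)" using fstP ij by simp
  next
    fix x :: "nat \<Rightarrow> complex"
    define X where "X i = (x i, 0::complex)" for i
    have nn: "qnonneg (\<Sum>i<3. \<Sum>j<3. qmult (qmult (qcnj (X i)) (P i j)) (X j))"
      using Q unfolding qpsd_def by blast
    have "fst (\<Sum>i<3. \<Sum>j<3. qmult (qmult (qcnj (X i)) (P i j)) (X j))
        = (\<Sum>i<3. \<Sum>j<3. cnj (x i) * fst (P i j) * x j)"
      by (simp add: fst_sum X_def qmult_def qcnj_def)
    also have "\<dots> = (\<Sum>i<3. \<Sum>j<3. cnj (x i) * M i j * x j)"
      by (intro sum.cong refl) (simp add: fstP)
    finally have e: "fst (\<Sum>i<3. \<Sum>j<3. qmult (qmult (qcnj (X i)) (P i j)) (X j)) = (\<Sum>i<3. \<Sum>j<3. cnj (x i) * M i j * x j)" .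
    show "Im (\<Sum>i<3. \<Sum>j<3. cnj (x i) * M i j * x j) = 0" using nn unfolding qnonneg_def e[symmetric] by blast
    show "0 \<le> Re (\<Sum>i<3. \<Sum>j<3. cnj (x i) * M i j * x j)" using nn unfolding qnonneg_def e[symmetric] by blast
  qed
qed

lemma hyp_from:
  fixes g h :: "complex \<Rightarrow> complex"
  assumes C: "\<And>\<zeta>. (\<forall>i<3. \<zeta> i \<in> ball 0 1) \<Longrightarrow>
     cpsd 3 (\<lambda>i j. (1 - g (\<zeta> i) * cnj (g (\<zeta> j)) - h (\<zeta> i) * cnj (h (\<zeta> j))) / (1 - \<zeta> i * cnj (\<zeta> j)))"
  shows "hyp3 g"
proof
  fix p0 p1 p2 c0 c1 c2 :: complex
  assume n: "cmod p0 < 1" "cmod p1 < 1" "cmod p2 < 1"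
  define \<zeta> where "\<zeta> i = (if i = 0 then p0 else if i = 1 then p1 else p2)" for i :: nat
  define x where "x i = (if i = 0 then c0 else if i = 1 then c1 else c2)" for i :: nat
  define y where "y i = cnj (h (\<zeta> i)) * x i" for i
  define M where "M i j = (1 - g (\<zeta> i) * cnj (g (\<zeta> j)) - h (\<zeta> i) * cnj (h (\<zeta> j))) / (1 - \<zeta> i * cnj (\<zeta> j))" for i j
  have zn: "cmod (\<zeta> i) < 1" for i using n unfolding \<zeta>_def by auto
  have zb: "\<forall>i<3. \<zeta> i \<in> ball 0 1" using zn by (simp add: dist_norm)
  have cp: "cpsd 3 M" unfolding M_def by (rule C[OF zb])
  then have r1: "0 \<le> Re (\<Sum>i<3. \<Sum>j<3. cnj (x i) * M i j * x j)" unfolding cpsd_def by blast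
  have r2: "0 \<le> Re (\<Sum>i<3. \<Sum>j<3. cnj (y i) * (1 / (1 - \<zeta> i * cnj (\<zeta> j))) * y j)"
    by (rule szego) (auto simp: zn)
  have trm: "cnj (x i) * Mk g (\<zeta> i) (\<zeta> j) * x j = cnj (x i) * M i j * x j + cnj (y i) * (1 / (1 - \<zeta> i * cnj (\<zeta> j))) * y j" for i j
    unfolding Mk_def M_def y_def by (simp add: diff_divide_distrib add_divide_distrib algebra_simps)
  have "Q3 g p0 p1 p2 c0 c1 c2 = (\<Sum>i<3. \<Sum>j<3. cnj (x i) * Mk g (\<zeta> i) (\<zeta> j) * x j)"
    unfolding Q3_def sum3 by (simp add: \<zeta>_def x_def)
  also have "\<dots> = (\<Sum>i<3. \<Sum>j<3. cnj (x i) * M i j * x j) + (\<Sum>i<3. \<Sum>j<3. cnj (y i) * (1 / (1 - \<zeta> i * cnj (\<zeta> j))) * y j)"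
    unfolding trm by (simp add: sum.distrib)
  finally show "0 \<le> Re (Q3 g p0 p1 p2 c0 c1 c2)" using r1 r2 by simp
qed



theorem mainTheorem5:
  fixes f :: "quat \<Rightarrow> quat"
  assumes pick3: "\<And>\<zeta> :: nat \<Rightarrow> complex. (\<forall>i<3. \<zeta> i \<in> ball 0 1) \<Longrightarrow>
                    qpsd 3 (pick_matrix f (\<lambda>i. qof_complex (\<zeta> i)))"
  defines "g \<equiv> (\<lambda>z. fst (f (qof_complex z)))"
      and "h \<equiv> (\<lambda>z. snd (f (qof_complex z)))"
  shows "(\<forall>\<zeta> :: nat \<Rightarrow> complex. (\<forall>i<3. \<zeta> i \<in> ball 0 1) \<longrightarrow>
            cpsd 3 (\<lambda>i j. (1 - g (\<zeta> i) * cnj (g (\<zeta> j)) - h (\<zeta> i) * cnj (h (\<zeta> j)))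
                          / (1 - \<zeta> i * cnj (\<zeta> j))))
       \<and> g analytic_on ball 0 1 \<and> h analytic_on ball 0 1
       \<and> g ` ball 0 1 \<subseteq> cball 0 1 \<and> h ` ball 0 1 \<subseteq> cball 0 1"
proof -
  have g': "\<And>z. g z = fst (f (qof_complex z))" by (simp add: g_def)
  have h': "\<And>z. h z = snd (f (qof_complex z))" by (simp add: h_def)
  have P1: "\<And>\<zeta>. (\<forall>i<3. \<zeta> i \<in> ball 0 1) \<Longrightarrow>
     cpsd 3 (\<lambda>i j. (1 - g (\<zeta> i) * cnj (g (\<zeta> j)) - h (\<zeta> i) * cnj (h (\<zeta> j))) / (1 - \<zeta> i * cnj (\<zeta> j)))"
    by (rule part1[OF pick3 g' h'])
  have hg: "hyp3 g" by (rule hyp_from[OF P1])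
  have sw: "(\<lambda>i j. (1 - h (\<zeta> i) * cnj (h (\<zeta> j)) - g (\<zeta> i) * cnj (g (\<zeta> j))) / (1 - \<zeta> i * cnj (\<zeta> j)))
      = (\<lambda>i j. (1 - g (\<zeta> i) * cnj (g (\<zeta> j)) - h (\<zeta> i) * cnj (h (\<zeta> j))) / (1 - \<zeta> i * cnj (\<zeta> j)))" for \<zeta> :: "nat \<Rightarrow> complex"
    by (intro ext) (simp add: algebra_simps)
  have hh: "hyp3 h" by (rule hyp_from[where h=g]) (simp only: sw P1)
  show ?thesis using P1 hyp3.holo[OF hg] hyp3.holo[OF hh] hyp3.into_disk[OF hg] hyp3.into_disk[OF hh]
    by (simp add: analytic_on_open)
qed

end
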